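(* Let $N\ge 1$ and let $D\in\mathcal{M}_{2N,2N}(\mathbb{R})$ be a symmetric, negative semidefinite matrix with $\operatorname{Ker} D=\operatorname{Span}(\mathbf{1})$, where $\mathbf{1}=(1,\dots,1)^T\in\mathbb{R}^{2N}$. Assume moreover that $D_{i,j}\ge 0$ for all $i\neq j$, and that there exists a sequence $k_0,\dots,k_n$ of integers in $\{1,\dots,2N\}$ containing every integer of $\{1,\dots,2N\}$, with $k_m\neq k_{m+1}$ and $D_{k_m,k_{m+1}}>0$ for all $m$. Let $F\in\mathbb{R}^{2N}$ have strictly positive components, and let $\ln(F)$ denote the vector $(\ln F_1,\dots,\ln F_{2N})^T$. Then the following are equivalent: (1) $DF=0$; (2) $F=\rho\mathbf{1}$ with $\rho=\frac{1}{2N}\sum_{j=1}^{2N}F_j$; (3) $\langle DF,\ln(F)\rangle=0$, where $\langle U,W\rangle=\sum_{k=1}^{2N}U_kW_k$.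
   Context: The matrix $D$ is a velocity discretization of a linear collision operator; $\langle\cdot,\cdot\rangle$ is the Euclidean inner product on $\mathbb{R}^{2N}$. *)

theory Defs
  imports "HOL-Analysis.Analysis"
begin

end

theory Submission
  imports Defs
begin

lemma xlog_mono: "0 < (a::real) \<Longrightarrow> 0 < b \<Longrightarrow> 0 \<le> (a - b) * (ln a - ln b)"
proof (cases "a \<le> b")
  case True
  assume "0 < a" "0 < b"
  then have "ln a \<le> ln b" using True by (simp add: ln_le_cancel_iff)
  then show ?thesis using True by (intro mult_nonpos_nonpos) auto
next
  case False
  assume "0 < a" "0 < b"
  then have "ln b \<le> ln a" using False by (simp add: ln_le_cancel_iff)
  then show ?thesis using False by (intro mult_nonneg_nonneg) auto
qed

lemma xlog_eq: "0 < (a::real) \<Longrightarrow> 0 < b \<Longrightarrow> (a - b) * (ln a - ln b) = 0 \<Longrightarrow> a = b"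
  by (metis eq_iff_diff_eq_0 ln_inj_iff mult_eq_0_iff)

theorem proposition2:
  fixes N :: nat and D :: "real ^ 'n ^ 'n" and F :: "real ^ 'n"
    and k :: "nat \<Rightarrow> 'n" and n :: nat
  assumes dim: "CARD('n) = 2 * N" and N_pos: "N \<ge> 1"
    and sym: "transpose D = D"
    and nsd: "\<forall>x :: real ^ 'n. x \<bullet> (D *v x) \<le> 0"
    and ker: "{x :: real ^ 'n. D *v x = 0} = span {(\<chi> i. 1)}"
    and offdiag: "\<forall>i j. i \<noteq> j \<longrightarrow> D $ i $ j \<ge> 0"
    and cover: "\<forall>i. \<exists>m\<le>n. k m = i"
    and chain: "\<forall>m<n. k m \<noteq> k (Suc m) \<and> D $ k m $ k (Suc m) > 0"
    and Fpos: "\<forall>i. F $ i > 0"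
  shows "(D *v F = 0 \<longleftrightarrow>
            F = ((\<Sum>j\<in>UNIV. F $ j) / real (2 * N)) *\<^sub>R (\<chi> i. 1))
       \<and> (F = ((\<Sum>j\<in>UNIV. F $ j) / real (2 * N)) *\<^sub>R (\<chi> i. 1) \<longleftrightarrow>
            (D *v F) \<bullet> (\<chi> i. ln (F $ i)) = 0)"
proof -
  define one :: "real ^ 'n" where "one = (\<chi> i. 1)"
  define c where "c = (\<Sum>j\<in>UNIV. F $ j) / real (2 * N)"
  have kerI: "D *v x = 0 \<longleftrightarrow> x \<in> span {one}" for x
    using ker unfolding one_def by blast
  have P1: "D *v F = 0 \<longleftrightarrow> F = c *\<^sub>R one"
  proof
    assume "D *v F = 0"
    then have "F \<in> span {one}" using kerI by blast
    then obtain a where a: "F = a *\<^sub>R one" by (auto simp: span_singleton)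
    then have "(\<Sum>j\<in>UNIV. F $ j) = a * real (2 * N)"
      using dim by (simp add: one_def)
    then have "c = a" using N_pos by (simp add: c_def)
    then show "F = c *\<^sub>R one" using a by simp
  next
    assume "F = c *\<^sub>R one"
    then show "D *v F = 0" using kerI by (simp add: span_mul span_base)
  qed
  have Dsym: "D $ i $ j = D $ j $ i" for i j
    proof -
    have "(transpose D) $ i $ j = D $ j $ i" by (simp add: transpose_def)
    then show ?thesis using sym by simp
  qed
  have row: "(\<Sum>j\<in>UNIV. D $ i $ j) = 0" for i
  proof -
    have "D *v one = 0" using kerI by (simp add: span_base)
    then have "(D *v one) $ i = 0" by simp
    then show ?thesis by (simp add: matrix_vector_mult_def one_def)
  qed
  have col: "(\<Sum>i\<in>UNIV. D $ i $ j) = 0" for j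
    using row[of j] by (simp add: Dsym)
  define L where "L i = ln (F $ i)" for i
  define S where "S = (\<Sum>i\<in>UNIV. \<Sum>j\<in>UNIV. D $ i $ j * F $ j * L i)"
  define T where "T i j = D $ i $ j * ((F $ j - F $ i) * (L j - L i))" for i j
  have Sdef: "(D *v F) \<bullet> (\<chi> i. ln (F $ i)) = S"
    by (simp add: S_def L_def inner_vec_def matrix_vector_mult_def sum_distrib_left sum_distrib_right mult_ac)
  have A: "(\<Sum>i\<in>UNIV. \<Sum>j\<in>UNIV. D $ i $ j * F $ j * L j) = 0"
  proof -
    have "(\<Sum>i\<in>UNIV. \<Sum>j\<in>UNIV. D $ i $ j * F $ j * L j)
        = (\<Sum>j\<in>UNIV. F $ j * L j * (\<Sum>i\<in>UNIV. D $ i $ j))"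
      by (subst sum.swap) (simp add: sum_distrib_left mult_ac)
    also have "\<dots> = 0" by (simp add: col)
    finally show ?thesis .
  qed
  have B: "(\<Sum>i\<in>UNIV. \<Sum>j\<in>UNIV. D $ i $ j * F $ i * L i) = 0"
  proof -
    have "(\<Sum>i\<in>UNIV. \<Sum>j\<in>UNIV. D $ i $ j * F $ i * L i)
        = (\<Sum>i\<in>UNIV. F $ i * L i * (\<Sum>j\<in>UNIV. D $ i $ j))"
      by (simp add: sum_distrib_left mult_ac)
    also have "\<dots> = 0" by (simp add: row)
    finally show ?thesis .
  qed
  have S': "(\<Sum>i\<in>UNIV. \<Sum>j\<in>UNIV. D $ i $ j * F $ i * L j) = S"
    unfolding S_def by (subst sum.swap) (simp add: Dsym)
  have key: "(\<Sum>i\<in>UNIV. \<Sum>j\<in>UNIV. T i j) = - 2 * S"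
  proof -
    have "(\<Sum>i\<in>UNIV. \<Sum>j\<in>UNIV. T i j) =
      (\<Sum>i\<in>UNIV. \<Sum>j\<in>UNIV. D $ i $ j * F $ j * L j)
      - (\<Sum>i\<in>UNIV. \<Sum>j\<in>UNIV. D $ i $ j * F $ j * L i)
      - (\<Sum>i\<in>UNIV. \<Sum>j\<in>UNIV. D $ i $ j * F $ i * L j)
      + (\<Sum>i\<in>UNIV. \<Sum>j\<in>UNIV. D $ i $ j * F $ i * L i)"
      by (simp add: T_def sum_subtractf[symmetric] sum.distrib[symmetric] algebra_simps)
    then show ?thesis using A B S' by (simp add: S_def)
  qed
  have Tnn: "0 \<le> T i j" for i j
  proof (cases "i = j")
    case True then show ?thesis by (simp add: T_def)
  next
    case False
    then show ?thesis using offdiag Fpos xlog_mono[of "F $ j" "F $ i"]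
      by (simp add: T_def L_def)
  qed
  have P3: "S = 0 \<Longrightarrow> D *v F = 0"
  proof -
    assume "S = 0"
    then have "(\<Sum>i\<in>UNIV. \<Sum>j\<in>UNIV. T i j) = 0" using key by simp
    then have "\<forall>i\<in>UNIV. (\<Sum>j\<in>UNIV. T i j) = 0"
      by (subst sum_nonneg_eq_0_iff[symmetric]) (auto intro: sum_nonneg Tnn)
    then have T0: "T i j = 0" for i j
      using sum_nonneg_eq_0_iff[of UNIV "T i"] Tnn by auto
    have edge: "D $ i $ j > 0 \<Longrightarrow> F $ i = F $ j" for i j
    proof -
      assume "D $ i $ j > 0"
      then have "(F $ j - F $ i) * (L j - L i) = 0" using T0[of i j] by (simp add: T_def)
      then have "F $ j = F $ i" using xlog_eq[of "F $ j" "F $ i"] Fpos unfolding L_def by blast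
      then show ?thesis by simp
    qed
    have "m \<le> n \<Longrightarrow> F $ k m = F $ k 0" for m
    proof (induction m)
      case 0 then show ?case by simp
    next
      case (Suc m)
      then have "D $ k m $ k (Suc m) > 0" using chain by simp
      then have "F $ k m = F $ k (Suc m)" by (rule edge)
      moreover have "F $ k m = F $ k 0" using Suc.IH Suc.prems by simp
      ultimately show ?case by simp
    qed
    then have "F $ i = F $ k 0" for i
    proof -
      obtain m where "m \<le> n" "k m = i" using cover by blast
      then show ?thesis using \<open>\<And>m. m \<le> n \<Longrightarrow> F $ k m = F $ k 0\<close> by blast
    qed
    then have Fe: "F = (F $ k 0) *\<^sub>R one" by (simp add: one_def vec_eq_iff)
    have "(F $ k 0) *\<^sub>R one \<in> span {one}" by (simp add: span_mul span_base)
    then show "D *v F = 0" using kerI Fe by metis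
  qed
  show ?thesis
    unfolding c_def[symmetric] one_def[symmetric] Sdef
    using P1 P3 Sdef by auto
qed

end
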